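(* For distinct $a,b\in H^2$ and $k\in\mathbb R$ let $S_k(a,b)=\{x\in H^2: d_H(x,a)^2-d_H(x,b)^2=k\}$. For $\mathsf x=(x_1,x_2)$, $\mathsf y=(y_1,y_2)$ in $H^2\times H^2$ with $x_i\ne y_i$ let $E_k(\mathsf x,\mathsf y)=S_k(x_1,y_1)\times S_k(y_2,x_2)$. Let $\mathsf x=(x_1,x_2)$, $\mathsf y=(y_1,y_2)$, $\mathsf z=(z_1,z_2)\in H^2\times H^2$ be such that $\mathsf y$ is between $\mathsf x$ and $\mathsf z$, and suppose $E_k(\mathsf x,\mathsf y)\cap E_l(\mathsf y,\mathsf z)\ne\emptyset$ for some $k,l\in\mathbb R$. Then there exists $m\in\mathbb R$ such that either $S_m(x_1,y_1)\cap S_m(y_1,z_1)\neq\emptyset$ or $S_m(y_2,x_2)\cap S_m(z_2,y_2)\neq\emptyset$.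
   Context: For $x,y,z\in H^2$, let $l_1=S_0(x,y)$ and $l_2=S_0(y,z)$ be the equidistant lines; if $l_1,l_2$ are disjoint, the complement of $l_1\cup l_2$ has three components, two half-planes bounded by $l_1$ resp. $l_2$, and a slab bounded by $l_1\cup l_2$. We say $y$ is between $x$ and $z$ if $l_1$ and $l_2$ are disjoint and $y$ lies in the slab. For points of $H^2\times H^2$, $\mathsf y$ is between $\mathsf x$ and $\mathsf z$ if for each $i=1,2$ the coordinate $y_i$ is between $x_i$ and $z_i$ in this sense. $d_H$ is the hyperbolic distance. *)

theory Defs
  imports "HOL-Analysis.Analysis"
begin

text \<open>Upper half-plane model of the hyperbolic plane.\<close>
definition H2 :: "complex set" where
  "H2 = {z. Im z > 0}"

definition dH :: "complex \<Rightarrow> complex \<Rightarrow> real" where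
  "dH z w = arcosh (1 + (cmod (z - w))\<^sup>2 / (2 * Im z * Im w))"

definition Sk :: "real \<Rightarrow> complex \<Rightarrow> complex \<Rightarrow> complex set" where
  "Sk k a b = {x \<in> H2. (dH x a)\<^sup>2 - (dH x b)\<^sup>2 = k}"

definition Ek :: "real \<Rightarrow> complex \<times> complex \<Rightarrow> complex \<times> complex \<Rightarrow> (complex \<times> complex) set" where
  "Ek k x y = Sk k (fst x) (fst y) \<times> Sk k (snd y) (snd x)"

text \<open>y is between x and z: the equidistant lines are disjoint and y lies in the slab,
  i.e. the component of the complement of both lines containing y is adjacent to both lines.\<close>
definition between1 :: "complex \<Rightarrow> complex \<Rightarrow> complex \<Rightarrow> bool" where
  "between1 x y z \<longleftrightarrow>
     (let l1 = Sk 0 x y; l2 = Sk 0 y z;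
          C = connected_component_set (H2 - (l1 \<union> l2)) y
      in l1 \<inter> l2 = {} \<and> y \<in> C \<and> closure C \<inter> l1 \<noteq> {} \<and> closure C \<inter> l2 \<noteq> {})"

definition between2 :: "complex \<times> complex \<Rightarrow> complex \<times> complex \<Rightarrow> complex \<times> complex \<Rightarrow> bool" where
  "between2 x y z \<longleftrightarrow> between1 (fst x) (fst y) (fst z) \<and> between1 (snd x) (snd y) (snd z)"

end

theory Submission
  imports Defs
begin

lemma H2_connected: "connected H2"
proof -
  have "convex H2"
    unfolding convex_def H2_def
  proof (clarify)
    fix x y :: complex and u v :: real
    assume "0 < Im x" "0 < Im y" "0 \<le> u" "0 \<le> v" "u + v = 1"
    then show "0 < Im (u *\<^sub>R x + v *\<^sub>R y)"
      by simp (smt (verit) mult_nonneg_nonneg mult_pos_pos)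
  qed
  then show ?thesis by (rule convex_connected)
qed

lemma dH_cont: assumes "a \<in> H2" shows "continuous_on H2 (\<lambda>p. dH p a)"
  unfolding dH_def
proof (rule continuous_on_compose2[OF continuous_on_arcosh[of "{1..}"]])
  show "continuous_on H2 (\<lambda>p. 1 + (cmod (p - a))\<^sup>2 / (2 * Im p * Im a))"
    using assms by (intro continuous_intros) (auto simp: H2_def)
  show "(\<lambda>p. 1 + (cmod (p - a))\<^sup>2 / (2 * Im p * Im a)) ` H2 \<subseteq> {1..}"
    using assms by (auto simp: H2_def)
qed auto

lemma dH_self: "dH a a = 0" by (simp add: dH_def)

lemma ivt_H2:
  assumes "continuous_on H2 f" "a \<in> H2" "b \<in> H2" "f a \<le> 0" "0 \<le> (f b::real)"
  shows "\<exists>q\<in>H2. f q = 0"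
proof -
  have "connected (f ` H2)" using connected_continuous_image[OF assms(1) H2_connected] .
  then have "(0::real) \<in> f ` H2"
    unfolding connected_iff_interval using assms by blast
  then show ?thesis by force
qed

lemma between1_neq:
  assumes "between1 x y z" "y \<in> H2"
  shows "dH y x \<noteq> 0"
proof -
  have "y \<in> H2 - (Sk 0 x y \<union> Sk 0 y z)"
    using assms(1) connected_component_in unfolding between1_def Let_def by blast
  then show ?thesis using assms(2) by (auto simp: Sk_def dH_self)
qed

theorem mainTheorem6:
  fixes x1 x2 y1 y2 z1 z2 :: complex and k l :: real
  assumes "x1 \<in> H2" "x2 \<in> H2" "y1 \<in> H2" "y2 \<in> H2" "z1 \<in> H2" "z2 \<in> H2"
    and "between2 (x1, x2) (y1, y2) (z1, z2)"
    and "Ek k (x1, x2) (y1, y2) \<inter> Ek l (y1, y2) (z1, z2) \<noteq> {}"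
  shows "\<exists>m::real. Sk m x1 y1 \<inter> Sk m y1 z1 \<noteq> {} \<or> Sk m y2 x2 \<inter> Sk m z2 y2 \<noteq> {}"
proof -
  obtain p1 p2 where p: "(p1, p2) \<in> Ek k (x1, x2) (y1, y2) \<inter> Ek l (y1, y2) (z1, z2)"
    using assms(8) by auto
  then have p1: "p1 \<in> H2" "(dH p1 x1)\<^sup>2 - (dH p1 y1)\<^sup>2 = k" "(dH p1 y1)\<^sup>2 - (dH p1 z1)\<^sup>2 = l"
    and p2: "p2 \<in> H2" "(dH p2 y2)\<^sup>2 - (dH p2 x2)\<^sup>2 = k" "(dH p2 z2)\<^sup>2 - (dH p2 y2)\<^sup>2 = l"
    by (auto simp: Ek_def Sk_def)
  have n1: "dH y1 x1 \<noteq> 0" and n2: "dH y2 x2 \<noteq> 0"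
    using assms(7) between1_neq assms(3,4) by (auto simp: between2_def)
  consider "k = l" | "k < l" | "k > l" by linarith
  then show ?thesis
  proof cases
    case 1
    then have "p1 \<in> Sk k x1 y1 \<inter> Sk k y1 z1" using p1 by (auto simp: Sk_def)
    then show ?thesis by blast
  next
    case 2
    define h where "h = (\<lambda>p. (dH p x1)\<^sup>2 - 2 * (dH p y1)\<^sup>2 + (dH p z1)\<^sup>2)"
    have c: "continuous_on H2 h" unfolding h_def
      by (intro continuous_intros dH_cont assms)
    have "h p1 \<le> 0" using p1 2 unfolding h_def by linarith
    moreover have "0 \<le> h y1" using n1 unfolding h_def dH_self by (simp add: add_nonneg_nonneg)
    ultimately obtain q where q: "q \<in> H2" "h q = 0" using ivt_H2[OF c p1(1) assms(3)] by blast
    define m where "m = (dH q x1)\<^sup>2 - (dH q y1)\<^sup>2"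
    have "q \<in> Sk m x1 y1 \<inter> Sk m y1 z1" using q unfolding Sk_def m_def h_def by auto
    then show ?thesis by blast
  next
    case 3
    define h where "h = (\<lambda>p. 2 * (dH p y2)\<^sup>2 - (dH p x2)\<^sup>2 - (dH p z2)\<^sup>2)"
    have c: "continuous_on H2 h" unfolding h_def
      by (intro continuous_intros dH_cont assms)
    have "0 \<le> h p2" using p2 3 unfolding h_def by linarith
    moreover have "h y2 \<le> 0" using n2 unfolding h_def dH_self by (simp add: add_nonneg_nonneg)
    ultimately obtain q where q: "q \<in> H2" "h q = 0" using ivt_H2[OF c assms(4) p2(1)] by blast
    define m where "m = (dH q y2)\<^sup>2 - (dH q x2)\<^sup>2"
    have "q \<in> Sk m y2 x2 \<inter> Sk m z2 y2" using q unfolding Sk_def m_def h_def by auto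
    then show ?thesis by blast
  qed
qed

end
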